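(* Fix $\alpha>0$, $\gamma>0$, $\Sigma_\epsilon>0$, $\omega_1\in[0,1)$, $\omega_2\in[0,1]$. Let $$T(x)=\left(\frac{\omega_2}{x^2}+\frac{(1-\omega_2)\alpha^2\gamma^2\Sigma_\epsilon}{(1+\gamma-x)^2}\right)^{-1/2},\qquad f_y(x)=\left(\frac{\omega_1}{x^2}+\frac{(1-\omega_1)\gamma^2\alpha^2\Sigma_\epsilon}{(1+\gamma-y)^2}\right)^{-1/2}.$$ Let $(\lambda_{2,t})_{t\in\mathbb Z}$ be a bi-infinite orbit of $T$ (i.e. $T(\lambda_{2,t})=\lambda_{2,t+1}$ for all $t\in\mathbb Z$) contained in a compact $T$-invariant interval $J\subset[1,1+\gamma)$. For $\lambda_{1,0},\lambda_{1,0}'\in[1,\infty)$ define $\lambda_{1,t+1}=f_{\lambda_{2,t}}(\lambda_{1,t})$ and $\lambda'_{1,t+1}=f_{\lambda_{2,t}}(\lambda'_{1,t})$ for $t\ge0$. Then $$\lim_{n\to\infty}|\lambda_{1,n}-\lambda'_{1,n}|=0.$$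
   Context: This is the case $\pi_1=0$ of the two-bank leverage model: bank 2 (the large, forcing bank) evolves autonomously by the unimodal map $T$, and bank 1 (the small, forced bank) evolves by the skew product $\lambda_{1,t+1}=f_{\lambda_{2,t}}(\lambda_{1,t})$, $\lambda_{2,t+1}=T(\lambda_{2,t})$. The space of bi-infinite $T$-orbits is the natural (invertible) extension $\hat I$ of $T$. *)

theory Defs
  imports "HOL-Analysis.Analysis"
begin

definition Tmap :: "real \<Rightarrow> real \<Rightarrow> real \<Rightarrow> real \<Rightarrow> real \<Rightarrow> real" where
  "Tmap \<alpha> \<gamma> \<Sigma> \<omega>\<^sub>2 x =
     (\<omega>\<^sub>2 / x^2 + (1 - \<omega>\<^sub>2) * \<alpha>^2 * \<gamma>^2 * \<Sigma> / (1 + \<gamma> - x)^2) powr (-1/2)"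

definition fmap :: "real \<Rightarrow> real \<Rightarrow> real \<Rightarrow> real \<Rightarrow> real \<Rightarrow> real \<Rightarrow> real" where
  "fmap \<alpha> \<gamma> \<Sigma> \<omega>\<^sub>1 y x =
     (\<omega>\<^sub>1 / x^2 + (1 - \<omega>\<^sub>1) * \<gamma>^2 * \<alpha>^2 * \<Sigma> / (1 + \<gamma> - y)^2) powr (-1/2)"

end

theory Submission imports Defs begin

lemma powr_half_pos: "(p::real) > 0 \<Longrightarrow> p powr (-1/2) = 1 / sqrt p"
  by (simp add: powr_minus_divide powr_half_sqrt[symmetric])

lemma inv_sqrt_lip:
  fixes p q c :: real
  assumes "c > 0" "p \<ge> c" "q \<ge> c"
  shows "\<bar>1/sqrt p - 1/sqrt q\<bar> \<le> \<bar>p - q\<bar> / (2 * c * sqrt c)"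
proof -
  have sp: "sqrt p \<ge> sqrt c" "sqrt q \<ge> sqrt c" using assms by auto
  have sc: "sqrt c > 0" using assms by auto
  have qp: "q - p = (sqrt q - sqrt p) * (sqrt p + sqrt q)"
    using assms by (simp add: algebra_simps)
  have e0: "1/sqrt p - 1/sqrt q = (sqrt q - sqrt p) / (sqrt p * sqrt q)"
    using sp sc by (simp add: field_simps)
  have e: "1/sqrt p - 1/sqrt q = (q - p) / (sqrt p * sqrt q * (sqrt p + sqrt q))"
  proof -
    have "sqrt p + sqrt q > 0" using sp sc by linarith
    hence "(q - p) / (sqrt p * sqrt q * (sqrt p + sqrt q)) = (sqrt q - sqrt p) / (sqrt p * sqrt q)"
      unfolding qp by (simp add: mult.commute[of _ "sqrt p + sqrt q"])
    thus ?thesis using e0 by simp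
  qed
  have d: "sqrt p * sqrt q * (sqrt p + sqrt q) \<ge> 2 * c * sqrt c"
  proof -
    have "sqrt p * sqrt q \<ge> sqrt c * sqrt c" using sp sc by (intro mult_mono) auto
    hence "sqrt p * sqrt q \<ge> c" using assms by simp
    moreover have "sqrt p + sqrt q \<ge> 2 * sqrt c" using sp by linarith
    ultimately have "sqrt p * sqrt q * (sqrt p + sqrt q) \<ge> c * (2 * sqrt c)"
      using sc assms by (intro mult_mono) auto
    thus ?thesis by simp
  qed
  have "\<bar>1/sqrt p - 1/sqrt q\<bar> = \<bar>p - q\<bar> / (sqrt p * sqrt q * (sqrt p + sqrt q))"
    using e sp sc by (simp add: abs_minus_commute)
  also have "\<dots> \<le> \<bar>p - q\<bar> / (2 * c * sqrt c)"
  proof (rule divide_left_mono)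
    have h: "0 < 2 * c * sqrt c" using sc assms by simp
    have "0 < sqrt p * sqrt q * (sqrt p + sqrt q)" using h d by linarith
    thus "0 < sqrt p * sqrt q * (sqrt p + sqrt q) * (2 * c * sqrt c)"
      using h by (rule mult_pos_pos)
  qed (use d in auto)
  finally show ?thesis .
qed

theorem mainTheorem2:
  fixes \<alpha> \<gamma> \<Sigma> \<omega>\<^sub>1 \<omega>\<^sub>2 a b :: real
    and lam2 :: "int \<Rightarrow> real"
    and lam1 lam1' :: "nat \<Rightarrow> real"
  assumes "\<alpha> > 0" and "\<gamma> > 0" and "\<Sigma> > 0"
    and "0 \<le> \<omega>\<^sub>1" and "\<omega>\<^sub>1 < 1"
    and "0 \<le> \<omega>\<^sub>2" and "\<omega>\<^sub>2 \<le> 1"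
    and "a \<le> b" and "{a..b} \<subseteq> {1..<1 + \<gamma>}"
    and "Tmap \<alpha> \<gamma> \<Sigma> \<omega>\<^sub>2 ` {a..b} \<subseteq> {a..b}"
    and "\<And>t. lam2 t \<in> {a..b}"
    and "\<And>t. Tmap \<alpha> \<gamma> \<Sigma> \<omega>\<^sub>2 (lam2 t) = lam2 (t + 1)"
    and "lam1 0 \<ge> 1" and "lam1' 0 \<ge> 1"
    and "\<And>t. lam1 (Suc t) = fmap \<alpha> \<gamma> \<Sigma> \<omega>\<^sub>1 (lam2 (int t)) (lam1 t)"
    and "\<And>t. lam1' (Suc t) = fmap \<alpha> \<gamma> \<Sigma> \<omega>\<^sub>1 (lam2 (int t)) (lam1' t)"
  shows "(\<lambda>n. \<bar>lam1 n - lam1' n\<bar>) \<longlonglongrightarrow> 0"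
proof -
  define w where "w = \<omega>\<^sub>1"
  define K where "K = (1 - w) * \<gamma>^2 * \<alpha>^2 * \<Sigma>"
  define c where "c = (\<lambda>t::nat. K / (1 + \<gamma> - lam2 (int t))^2)"
  define c0 where "c0 = K / \<gamma>^2"
  have Kpos: "K > 0" unfolding K_def w_def using assms by simp
  have c0pos: "c0 > 0" unfolding c0_def using Kpos assms by simp
  have cge: "c t \<ge> c0" for t
  proof -
    have y: "lam2 (int t) \<ge> 1" "lam2 (int t) < 1 + \<gamma>" using assms(9) assms(11)[of "int t"] by auto
    hence "(1 + \<gamma> - lam2 (int t))^2 \<le> \<gamma>^2" "(1 + \<gamma> - lam2 (int t))^2 > 0"
      by (auto intro!: power_mono)
    thus ?thesis unfolding c_def c0_def using Kpos assms(2)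
      by (intro divide_left_mono) auto
  qed
  define u where "u = (\<lambda>n. w * (1 / (lam1 n)^2) + c n)"
  define u' where "u' = (\<lambda>n. w * (1 / (lam1' n)^2) + c n)"
  have upos: "u n \<ge> c0" "u' n \<ge> c0" for n
    unfolding u_def u'_def using cge[of n] assms(4) w_def
    by (auto intro!: add_nonneg_pos add_increasing)
  have l1: "lam1 (Suc n) = 1 / sqrt (u n)" for n
  proof -
    have "lam1 (Suc n) = (u n) powr (-1/2)"
      using assms(15)[of n] by (simp add: fmap_def u_def c_def K_def w_def mult.assoc)
    thus ?thesis using upos[of n] c0pos powr_half_pos[of "u n"] by simp
  qed
  have l1': "lam1' (Suc n) = 1 / sqrt (u' n)" for n
  proof -
    have "lam1' (Suc n) = (u' n) powr (-1/2)"
      using assms(16)[of n] by (simp add: fmap_def u'_def c_def K_def w_def mult.assoc)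
    thus ?thesis using upos[of n] c0pos powr_half_pos[of "u' n"] by simp
  qed
  have inv: "1 / (lam1 (Suc n))^2 = u n" "1 / (lam1' (Suc n))^2 = u' n" for n
    using l1[of n] l1'[of n] upos[of n] c0pos by (simp_all add: power_divide)
  have rec: "u (Suc n) - u' (Suc n) = w * (u n - u' n)" for n
  proof -
    have "u (Suc n) - u' (Suc n) = w * (1/(lam1 (Suc n))^2) - w * (1/(lam1' (Suc n))^2)"
      by (simp add: u_def u'_def)
    also have "\<dots> = w * (u n - u' n)" by (simp only: inv) (simp add: algebra_simps)
    finally show ?thesis .
  qed
  define d0 where "d0 = u 0 - u' 0"
  have dif: "u n - u' n = w^n * d0" for n
    by (induction n) (simp_all add: rec d0_def)
  have wl: "(\<lambda>n. w^n) \<longlonglongrightarrow> 0"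
    using assms(4,5) w_def by (intro LIMSEQ_power_zero) auto
  have ud: "(\<lambda>n. \<bar>u n - u' n\<bar> / (2 * c0 * sqrt c0)) \<longlonglongrightarrow> 0"
  proof -
    have "(\<lambda>n. w^n * d0) \<longlonglongrightarrow> 0"
      using tendsto_mult_left_zero[OF wl] by blast
    hence "(\<lambda>n. \<bar>w^n * d0\<bar>) \<longlonglongrightarrow> 0" by (rule tendsto_rabs_zero)
    hence "(\<lambda>n. \<bar>w^n * d0\<bar> / (2 * c0 * sqrt c0)) \<longlonglongrightarrow> 0"
      by (rule tendsto_divide_zero)
    thus ?thesis by (simp only: dif)
  qed
  have "(\<lambda>n. \<bar>lam1 (Suc n) - lam1' (Suc n)\<bar>) \<longlonglongrightarrow> 0"
  proof (rule Lim_null_comparison[OF _ ud])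
    show "\<forall>\<^sub>F n in sequentially. norm \<bar>lam1 (Suc n) - lam1' (Suc n)\<bar> \<le> \<bar>u n - u' n\<bar> / (2 * c0 * sqrt c0)"
    proof (rule always_eventually, rule allI)
      fix n
      show "norm \<bar>lam1 (Suc n) - lam1' (Suc n)\<bar> \<le> \<bar>u n - u' n\<bar> / (2 * c0 * sqrt c0)"
        using inv_sqrt_lip[OF c0pos upos(1)[of n] upos(2)[of n]] by (simp only: l1 l1' real_norm_def abs_abs)
    qed
  qed
  thus ?thesis by (rule LIMSEQ_imp_Suc)
qed
end
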